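(* Let $\lambda=\bar p/(1-\bar p)$. For every distribution $\eta$ on $\mathcal R$, $\lim_{n\to\infty}E_\eta[S_n]/n=\lambda$. Moreover there exist constants $c_1,c_2>0$ such that for every $n\in\mathbb N$ and every distribution $\eta$ on $\mathcal R$, $$\big|E_\eta[S_n]-\lambda n-\eta\cdot\mathbf r\big|\le c_1e^{-c_2n},\qquad\text{where } \mathbf r=\Big(I-K+\frac{(\mathbf 1-\mathbf p)\mu D_{1-p}K}{1-\bar p}\Big)^{-1}\mathbf p-\lambda\mathbf 1.$$
   Context: Let $\mathcal R=\{1,\dots,N\}$ and let $K$ be a stochastic matrix on $\mathcal R$ whose Markov chain has a unique closed irreducible subset; let $\mu$ (row vector) be its unique stationary distribution. Fix $p:\mathcal R\to(0,1)$, $\mathbf p=(p(1),\dots,p(N))^t$, $\mathbf 1$ the all-ones column vector, $I$ the identity, $D_p$ the diagonal matrix with entries $p(i)$, $D_{1-p}=I-D_p$, $\bar p=\mu\cdot\mathbf p$. Under $P_\eta$, $(R_j)_{j\ge1}$ is a Markov chain with transition matrix $K$ and $R_1\sim\eta$, and given $(R_j)$ the $\xi(j)$, $j\ge1$, are independent Bernoulli$(p(R_j))$ (a "success" if $\xi(j)=1$, "failure" otherwise). $S_n=\inf\{k\ge0:\sum_{j=1}^{k+n}(1-\xi(j))=n\}$ is the number of successes before the $n$-th failure. (Equivalently $E_\eta[S_n]$ is the mean of one step $U_1$ of the forward branching-like process started from $U_0=n$.) *)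

theory Defs
  imports "HOL-Analysis.Analysis"
begin

(* States R = the finite type 'r; K :: real^'r^'r (rows indexed by current state). *)

definition stochastic_matrix :: "real^'r^'r \<Rightarrow> bool" where
  "stochastic_matrix K \<longleftrightarrow> (\<forall>i j. K$i$j \<ge> 0) \<and> (\<forall>i. (\<Sum>j\<in>UNIV. K$i$j) = 1)"

definition prob_vector :: "real^'r \<Rightarrow> bool" where
  "prob_vector v \<longleftrightarrow> (\<forall>i. v$i \<ge> 0) \<and> (\<Sum>i\<in>UNIV. v$i) = 1"

definition step_rel :: "real^'r^'r \<Rightarrow> ('r \<times> 'r) set" where
  "step_rel K = {(i,j). K$i$j > 0}"

definition closed_set :: "real^'r^'r \<Rightarrow> 'r set \<Rightarrow> bool" where
  "closed_set K C \<longleftrightarrow> C \<noteq> {} \<and> (\<forall>i\<in>C. \<forall>j. K$i$j > 0 \<longrightarrow> j \<in> C)"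

definition irreducible_set :: "real^'r^'r \<Rightarrow> 'r set \<Rightarrow> bool" where
  "irreducible_set K C \<longleftrightarrow> (\<forall>i\<in>C. \<forall>j\<in>C. (i,j) \<in> (step_rel K)\<^sup>*)"

definition unique_closed_irreducible :: "real^'r^'r \<Rightarrow> bool" where
  "unique_closed_irreducible K \<longleftrightarrow> (\<exists>!C. closed_set K C \<and> irreducible_set K C)"

definition stationary :: "real^'r^'r \<Rightarrow> real^'r \<Rightarrow> bool" where
  "stationary K \<mu> \<longleftrightarrow> prob_vector \<mu> \<and> \<mu> v* K = \<mu>"

(* Probability under P_eta that R_1..R_m = rs and xi(1..m) = xs (True = success). *)
definition path_prob ::
  "real^'r^'r \<Rightarrow> ('r \<Rightarrow> real) \<Rightarrow> real^'r \<Rightarrow> 'r list \<Rightarrow> bool list \<Rightarrow> real" where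
  "path_prob K p \<eta> rs xs =
     (if rs = [] then 1 else
       \<eta>$(hd rs) * (\<Prod>j<length rs - 1. K$(rs!j)$(rs!(j+1)))
       * (\<Prod>j<length rs. if xs!j then p (rs!j) else 1 - p (rs!j)))"

definition xi_prob :: "real^'r^'r \<Rightarrow> ('r \<Rightarrow> real) \<Rightarrow> real^'r \<Rightarrow> bool list \<Rightarrow> real" where
  "xi_prob K p \<eta> xs = (\<Sum>rs\<in>{rs::'r list. length rs = length xs}. path_prob K p \<eta> rs xs)"

definition failures :: "nat \<Rightarrow> bool list \<Rightarrow> nat" where
  "failures t xs = length (filter Not (take t xs))"

(* S_n = k is determined by xi(1..n+k): exactly n failures among the first n+k,
   and fewer than n among the first n+k-1 (when k > 0). *)
definition Sn_event :: "nat \<Rightarrow> nat \<Rightarrow> bool list \<Rightarrow> bool" where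
  "Sn_event n k xs \<longleftrightarrow> failures (n+k) xs = n \<and> (k = 0 \<or> failures (n+k-1) xs < n)"

definition prob_Sn :: "real^'r^'r \<Rightarrow> ('r \<Rightarrow> real) \<Rightarrow> real^'r \<Rightarrow> nat \<Rightarrow> nat \<Rightarrow> real" where
  "prob_Sn K p \<eta> n k =
     (\<Sum>xs\<in>{xs::bool list. length xs = n+k \<and> Sn_event n k xs}. xi_prob K p \<eta> xs)"

definition expect_Sn :: "real^'r^'r \<Rightarrow> ('r \<Rightarrow> real) \<Rightarrow> real^'r \<Rightarrow> nat \<Rightarrow> real" where
  "expect_Sn K p \<eta> n = (\<Sum>k. real k * prob_Sn K p \<eta> n k)"

definition diag_mat :: "('r \<Rightarrow> real) \<Rightarrow> real^'r^'r" where
  "diag_mat f = (\<chi> i j. if i = j then f i else 0)"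

definition outer_prod :: "real^'r \<Rightarrow> real^'r \<Rightarrow> real^'r^'r" where
  "outer_prod u v = (\<chi> i j. u$i * v$j)"

definition pbar :: "real^'r \<Rightarrow> ('r \<Rightarrow> real) \<Rightarrow> real" where
  "pbar \<mu> p = \<mu> \<bullet> (\<chi> i. p i)"

definition r_vec :: "real^'r^'r \<Rightarrow> ('r \<Rightarrow> real) \<Rightarrow> real^'r \<Rightarrow> real^'r" where
  "r_vec K p \<mu> =
     (let pv = (\<chi> i. p i)::real^'r; pb = pbar \<mu> p; lam = pb / (1 - pb) in
      matrix_inv (mat 1 - K + (1 / (1 - pb)) *\<^sub>R
                    outer_prod (1 - pv) (\<mu> v* (diag_mat (\<lambda>i. 1 - p i) ** K))) *v pv
      - lam *\<^sub>R 1)"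

end

theory Submission
  imports Defs
begin



lemma fin_len: "finite {xs::'a::finite list. length xs = m}"
  using finite_lists_length_eq[of "UNIV::'a set" m] by simp

lemma sum_lists_Suc:
  fixes f :: "'a::finite list \<Rightarrow> 'b::comm_monoid_add"
  shows "(\<Sum>xs\<in>{xs. length xs = Suc m}. f xs) = (\<Sum>x\<in>UNIV. \<Sum>xs\<in>{xs. length xs = m}. f (x#xs))"
proof -
  have e: "{xs::'a list. length xs = Suc m} = (\<lambda>(x,xs). x#xs) ` (UNIV \<times> {xs. length xs = m})"
    by (auto simp: length_Suc_conv image_iff)
  have i: "inj_on (\<lambda>(x,xs). x#xs) (UNIV \<times> {xs::'a list. length xs = m})"
    by (auto simp: inj_on_def)
  show ?thesis
    unfolding e sum.reindex[OF i] sum.cartesian_product by (simp add: split_def)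
qed

lemma len0_set[simp]: "{xs. length xs = 0} = {[]}" by auto

lemma path_prob_Cons:
  assumes "rs \<noteq> []"
  shows "path_prob K p \<eta> (r#rs) (x#xs) = \<eta>$r * (if x then p r else 1 - p r) * path_prob K p (K$r) rs xs"
proof -
  obtain m where m: "length rs = Suc m" using assms by (cases rs) auto
  have "(\<Prod>j<length (r#rs) - 1. K$((r#rs)!j)$((r#rs)!(j+1))) = K$r$(hd rs) * (\<Prod>j<length rs - 1. K$(rs!j)$(rs!(j+1)))"
    using assms m by (simp del: prod.lessThan_Suc add: prod.lessThan_Suc_shift hd_conv_nth)
  moreover have "(\<Prod>j<length (r#rs). if (x#xs)!j then p ((r#rs)!j) else 1 - p ((r#rs)!j))
     = (if x then p r else 1 - p r) * (\<Prod>j<length rs. if xs!j then p (rs!j) else 1 - p (rs!j))"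
    by (simp del: prod.lessThan_Suc add: prod.lessThan_Suc_shift cong: if_cong)
  ultimately show ?thesis using assms unfolding path_prob_def by simp
qed

lemma xi_prob_Cons:
  "xi_prob K p \<eta> (x#xs) = (\<Sum>r\<in>UNIV. \<eta>$r * (if x then p r else 1 - p r) * (if xs = [] then 1 else xi_prob K p (K$r) xs))"
proof (cases "xs = []")
  case True
  have "xi_prob K p \<eta> [x] = (\<Sum>r\<in>UNIV. \<Sum>rs\<in>{rs. length rs = 0}. path_prob K p \<eta> (r#rs) [x])"
    unfolding xi_prob_def using sum_lists_Suc[where m=0] by simp
  also have "\<dots> = (\<Sum>r\<in>UNIV. path_prob K p \<eta> [r] [x])" by simp
  also have "\<dots> = (\<Sum>r\<in>UNIV. \<eta>$r * (if x then p r else 1 - p r))" by (simp add: path_prob_def lessThan_Suc cong: if_cong)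
  finally show ?thesis using True by simp
next
  case False
  have "xi_prob K p \<eta> (x#xs) = (\<Sum>r\<in>UNIV. \<Sum>rs\<in>{rs. length rs = length xs}. path_prob K p \<eta> (r#rs) (x#xs))"
    unfolding xi_prob_def by (simp add: sum_lists_Suc)
  also have "\<dots> = (\<Sum>r\<in>UNIV. \<Sum>rs\<in>{rs. length rs = length xs}. \<eta>$r * (if x then p r else 1 - p r) * path_prob K p (K$r) rs xs)"
    by (intro sum.cong refl, subst path_prob_Cons) (use False in auto)
  finally show ?thesis using False by (simp add: xi_prob_def sum_distrib_left)
qed

lemma failures_le: "failures t xs \<le> t"
  unfolding failures_def using length_filter_le[of Not "take t xs"] by simp

lemma failures_0[simp]: "failures 0 xs = 0"
  unfolding failures_def by simp

lemma failures_Cons[simp]: "failures (Suc t) (b#xs) = (if b then 0 else 1) + failures t xs"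
  unfolding failures_def by simp

lemma Sn_event_True: "Sn_event (Suc n) k (True#xs) \<longleftrightarrow> (0<k \<and> Sn_event (Suc n) (k-1) xs)"
proof (cases k)
  case 0
  then show ?thesis using failures_le[of n xs] by (simp add: Sn_event_def)
next
  case (Suc k')
  then show ?thesis using failures_le[of n xs]
    by (cases k') (auto simp: Sn_event_def)
qed

lemma Sn_event_False: "Sn_event (Suc n) k (False#xs) \<longleftrightarrow> Sn_event n k xs"
proof (cases k)
  case 0
  then show ?thesis by (simp add: Sn_event_def)
next
  case (Suc k')
  then show ?thesis by (auto simp: Sn_event_def)
qed

locale chainp =
  fixes K :: "real^'r::finite^'r" and p :: "'r \<Rightarrow> real"
  assumes stoch: "stochastic_matrix K" and p0: "\<And>i. 0 < p i" and p1: "\<And>i. p i < 1"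
begin

definition pw :: "bool \<Rightarrow> 'r \<Rightarrow> real" where "pw b i = (if b then p i else 1 - p i)"
definition T :: "bool \<Rightarrow> real^'r \<Rightarrow> real^'r" where "T b x = (\<chi> i. pw b i * (K *v x)$i)"
definition vv :: "bool list \<Rightarrow> real^'r" where "vv xs = foldr T xs 1"
lemma vv_Nil[simp]: "vv [] = 1" and vv_Cons[simp]: "vv (b#xs) = T b (vv xs)"
  by (simp_all add: vv_def)

definition FF :: "nat \<Rightarrow> nat \<Rightarrow> real^'r" where
  "FF n k = (\<Sum>xs\<in>{xs. length xs = n+k \<and> Sn_event n k xs}. vv xs)"

lemma Kv: "(K *v x)$i = (\<Sum>j\<in>UNIV. K$i$j * x$j)"
  by (simp add: matrix_vector_mult_def)

lemma K_nonneg: "0 \<le> K$i$j" using stoch by (simp add: stochastic_matrix_def)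
lemma K_row: "(\<Sum>j\<in>UNIV. K$i$j) = 1" using stoch by (simp add: stochastic_matrix_def)

lemma K1: "K *v 1 = 1"
  by (simp add: vec_eq_iff Kv K_row)

lemma pw_nonneg: "0 \<le> pw b i" using p0[of i] p1[of i] by (simp add: pw_def)

lemma T_comp: "T b x $ i = pw b i * (\<Sum>j\<in>UNIV. K$i$j * x$j)"
  by (simp add: T_def Kv)

lemma T_add: "T b (x + y) = T b x + T b y"
  by (simp add: vec_eq_iff T_comp algebra_simps sum.distrib)
lemma T_diff: "T b (x - y) = T b x - T b y"
  by (simp add: vec_eq_iff T_comp algebra_simps sum_subtractf)
lemma T_scaleR: "T b (c *\<^sub>R x) = c *\<^sub>R T b x"
  by (simp add: vec_eq_iff T_comp algebra_simps sum_distrib_left)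
lemma T_0: "T b 0 = 0"
  by (simp add: vec_eq_iff T_comp)
lemma T_sum: "T b (sum f S) = (\<Sum>x\<in>S. T b (f x))"
  by (induction S rule: infinite_finite_induct) (simp_all add: T_add T_0)
lemma T_1: "T b 1 $ i = pw b i"
  by (simp add: T_comp K_row)

lemma T_nonneg: "(\<And>j. 0 \<le> x$j) \<Longrightarrow> 0 \<le> T b x $ i"
  unfolding T_comp by (intro mult_nonneg_nonneg pw_nonneg sum_nonneg) (simp add: K_nonneg)

lemma T_mono: "(\<And>j. x$j \<le> y$j) \<Longrightarrow> T b x $ i \<le> T b y $ i"
  unfolding T_comp by (intro mult_left_mono pw_nonneg sum_mono) (simp_all add: K_nonneg mult_left_mono)

lemma xi_vv: "xs \<noteq> [] \<Longrightarrow> xi_prob K p \<eta> xs = \<eta> \<bullet> vv xs"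
proof (induction xs arbitrary: \<eta>)
  case Nil then show ?case by simp
next
  case (Cons x xs)
  show ?case
  proof (cases "xs = []")
    case True
    then show ?thesis
      by (simp add: xi_prob_Cons vv_def inner_vec_def T_1[unfolded pw_def] mult.commute)
  next
    case False
    have "xi_prob K p \<eta> (x#xs) = (\<Sum>r\<in>UNIV. \<eta>$r * (pw x r * (K$r \<bullet> vv xs)))"
      using False Cons.IH by (simp add: xi_prob_Cons pw_def mult.assoc)
    also have "\<dots> = \<eta> \<bullet> vv (x#xs)"
      by (simp add: vv_def inner_vec_def T_def matrix_vector_mul_component)
    finally show ?thesis .
  qed
qed

lemma prob_Sn_FF:
  assumes "prob_vector \<eta>"
  shows "prob_Sn K p \<eta> n k = \<eta> \<bullet> FF n k"
proof (cases "n + k = 0")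
  case True
  then have n0: "n = 0" "k = 0" by auto
  have s: "{xs::bool list. length xs = n + k \<and> Sn_event n k xs} = {[]}"
    using n0 by (auto simp: Sn_event_def)
  have "xi_prob K p \<eta> [] = 1" by (simp add: xi_prob_def path_prob_def)
  then have "prob_Sn K p \<eta> n k = 1" unfolding prob_Sn_def s by simp
  moreover have "FF n k = 1" unfolding FF_def s by simp
  moreover have "\<eta> \<bullet> 1 = 1" using assms by (simp add: prob_vector_def inner_vec_def)
  ultimately show ?thesis by simp
next
  case False
  have fin: "finite {xs::bool list. length xs = n + k \<and> Sn_event n k xs}"
    by (rule finite_subset[OF _ fin_len[of "n+k"]]) auto
  have "prob_Sn K p \<eta> n k = (\<Sum>xs\<in>{xs. length xs = n + k \<and> Sn_event n k xs}. \<eta> \<bullet> vv xs)"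
    unfolding prob_Sn_def using False by (intro sum.cong refl xi_vv) auto
  then show ?thesis by (simp add: FF_def inner_sum_right)
qed

lemma FF_0: "FF 0 k = (if k = 0 then 1 else 0)"
proof (cases "k = 0")
  case True
  have s: "{xs::bool list. length xs = 0 + k \<and> Sn_event 0 k xs} = {[]}"
    using True by (auto simp: Sn_event_def)
  show ?thesis unfolding FF_def s using True by simp
next
  case False
  have s: "{xs::bool list. length xs = 0 + k \<and> Sn_event 0 k xs} = {}"
    using False by (auto simp: Sn_event_def)
  show ?thesis unfolding FF_def s using False by simp
qed

lemma FF_alt: "FF n k = (\<Sum>xs\<in>{xs. length xs = n+k}. if Sn_event n k xs then vv xs else 0)"
proof -
  have "(\<Sum>xs\<in>{xs. length xs = n+k}. if Sn_event n k xs then vv xs else 0) = sum vv {xs \<in> {xs. length xs = n+k}. Sn_event n k xs}"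
    by (rule sum.inter_filter[OF fin_len, symmetric])
  then show ?thesis by (simp add: FF_def)
qed

lemma FF_Suc: "FF (Suc n) k = (if 0 < k then T True (FF (Suc n) (k-1)) else 0) + T False (FF n k)"
proof -
  have "FF (Suc n) k = (\<Sum>xs\<in>{xs. length xs = n+k}. if Sn_event (Suc n) k (False#xs) then T False (vv xs) else 0)
     + (\<Sum>xs\<in>{xs. length xs = n+k}. if Sn_event (Suc n) k (True#xs) then T True (vv xs) else 0)"
    unfolding FF_alt by (simp add: sum_lists_Suc UNIV_bool cong: if_cong)
  also have "\<dots> = (if 0 < k then T True (FF (Suc n) (k-1)) else 0) + T False (FF n k)"
  proof -
    have a: "(\<Sum>xs\<in>{xs. length xs = n+k}. if Sn_event (Suc n) k (True#xs) then T True (vv xs) else 0)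
       = (if 0 < k then T True (FF (Suc n) (k-1)) else 0)"
    proof (cases "0 < k")
      case True
      then have "Suc n + (k - 1) = n + k" by simp
      then show ?thesis using True
        by (simp add: FF_alt Sn_event_True T_sum if_distrib[of "T True"] T_0 cong: if_cong)
    qed (simp add: Sn_event_True)
    have b: "(\<Sum>xs\<in>{xs. length xs = n+k}. if Sn_event (Suc n) k (False#xs) then T False (vv xs) else 0)
       = T False (FF n k)"
      by (simp add: FF_alt Sn_event_False T_sum if_distrib[of "T False"] T_0 cong: if_cong)
    show ?thesis using a b by (simp add: add.commute)
  qed
  finally show ?thesis .
qed

end



lemma ex_argmax: fixes f :: "'a::finite \<Rightarrow> 'b::linorder" shows "\<exists>i0. \<forall>i. f i \<le> f i0"
proof -
  have "Max (range f) \<in> range f" by (rule Max_in) auto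
  then obtain i0 where "f i0 = Max (range f)" by (metis rangeE)
  moreover have "f i \<le> Max (range f)" for i by (rule Max_ge) auto
  ultimately show ?thesis by metis
qed

lemma ex_argmin: fixes f :: "'a::finite \<Rightarrow> 'b::linorder" shows "\<exists>i0. \<forall>i. f i0 \<le> f i"
proof -
  have "Min (range f) \<in> range f" by (rule Min_in) auto
  then obtain i0 where "f i0 = Min (range f)" by (metis rangeE)
  moreover have "Min (range f) \<le> f i" for i by (rule Min_le) auto
  ultimately show ?thesis by metis
qed

context chainp
begin

definition P :: "nat \<Rightarrow> nat \<Rightarrow> real^'r" where "P n N = (\<Sum>k<N. FF n k)"
definition Q :: "nat \<Rightarrow> nat \<Rightarrow> real^'r" where "Q n N = (\<Sum>k<N. real k *\<^sub>R FF n k)"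
definition G :: "nat \<Rightarrow> real^'r" where "G n = (\<chi> i. \<Sum>k. FF n k $ i)"
definition H :: "nat \<Rightarrow> real^'r" where "H n = (\<chi> i. \<Sum>k. real k * FF n k $ i)"

lemma vv_nonneg: "0 \<le> vv xs $ i"
  by (induction xs arbitrary: i) (simp_all add: T_nonneg)

lemma FF_nonneg: "0 \<le> FF n k $ i"
  unfolding FF_def sum_component by (intro sum_nonneg vv_nonneg)

lemma FF_0_comp: "FF 0 k $ i = (if k = 0 then 1 else 0)"
  by (simp add: FF_0)

lemma kdelta0[simp]: "real k * (if k = 0 then 1 else (0::real)) = 0"
  by simp

lemma FF_Suc0: "FF (Suc n) 0 = T False (FF n 0)"
  using FF_Suc[of n 0] by simp

lemma FF_SucSuc: "FF (Suc n) (Suc k) = T True (FF (Suc n) k) + T False (FF n (Suc k))"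
  using FF_Suc[of n "Suc k"] by simp

lemma Kavg_le: "(\<And>j. y$j \<le> M) \<Longrightarrow> (\<Sum>j\<in>UNIV. K$i$j * y$j) \<le> M"
proof -
  assume a: "\<And>j. y$j \<le> M"
  have "(\<Sum>j\<in>UNIV. K$i$j * y$j) \<le> (\<Sum>j\<in>UNIV. K$i$j * M)"
    by (intro sum_mono mult_left_mono a K_nonneg)
  also have "\<dots> = M" by (simp add: sum_distrib_right[symmetric] K_row)
  finally show ?thesis .
qed

lemma Kavg_ge: "(\<And>j. m \<le> y$j) \<Longrightarrow> m \<le> (\<Sum>j\<in>UNIV. K$i$j * y$j)"
proof -
  assume a: "\<And>j. m \<le> y$j"
  have "m = (\<Sum>j\<in>UNIV. K$i$j * m)" by (simp add: sum_distrib_right[symmetric] K_row)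
  also have "\<dots> \<le> (\<Sum>j\<in>UNIV. K$i$j * y$j)"
    by (intro sum_mono mult_left_mono a K_nonneg)
  finally show ?thesis .
qed

lemma T_lim:
  assumes "\<And>j. (\<lambda>N. X N $ j) \<longlonglongrightarrow> x $ j"
  shows "(\<lambda>N. T b (X N) $ i) \<longlonglongrightarrow> T b x $ i"
  unfolding T_comp by (intro tendsto_intros assms)

lemma P_Suc: "P (Suc n) (Suc N) = T True (P (Suc n) N) + T False (P n (Suc N))"
proof -
  have "P (Suc n) (Suc N) = FF (Suc n) 0 + (\<Sum>k<N. FF (Suc n) (Suc k))"
    unfolding P_def by (rule sum.lessThan_Suc_shift)
  also have "\<dots> = T False (FF n 0) + (\<Sum>k<N. T True (FF (Suc n) k) + T False (FF n (Suc k)))"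
    by (simp add: FF_Suc0 FF_SucSuc)
  also have "\<dots> = T True (P (Suc n) N) + T False (FF n 0 + (\<Sum>k<N. FF n (Suc k)))"
    by (simp add: P_def T_sum T_add sum.distrib)
  also have "FF n 0 + (\<Sum>k<N. FF n (Suc k)) = P n (Suc N)"
    unfolding P_def by (rule sum.lessThan_Suc_shift[symmetric])
  finally show ?thesis .
qed

lemma P_le1: "P n N $ i \<le> 1"
proof (induction n arbitrary: N i)
  case 0
  show ?case by (cases N) (simp_all add: P_def sum_component FF_0_comp sum.lessThan_Suc_shift del: sum.lessThan_Suc)
next
  case (Suc n)
  note outer = Suc.IH
  show ?case
  proof (induction N arbitrary: i)
    case 0 then show ?case by (simp add: P_def)
  next
    case (Suc N)
    have "T True (P (Suc n) N) $ i \<le> T True 1 $ i"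
      by (intro T_mono) (simp add: Suc.IH)
    moreover have "T False (P n (Suc N)) $ i \<le> T False 1 $ i"
      by (intro T_mono) (simp add: outer)
    ultimately show ?case by (simp add: P_Suc T_1 pw_def)
  qed
qed

lemma P_comp: "P n N $ i = (\<Sum>k<N. FF n k $ i)"
  by (simp add: P_def sum_component)

lemma summable_FF: "summable (\<lambda>k. FF n k $ i)"
  by (rule summableI_nonneg_bounded[where x=1]) (simp_all add: FF_nonneg P_le1 P_comp[symmetric])

lemma G_lim: "(\<lambda>N. P n N $ i) \<longlonglongrightarrow> G n $ i"
  using summable_sums[OF summable_FF[of n i]] unfolding sums_def P_comp G_def by simp

lemma G_Suc: "G (Suc n) = T True (G (Suc n)) + T False (G n)"
proof -
  have "G (Suc n) $ i = (T True (G (Suc n)) + T False (G n)) $ i" for i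
  proof -
    have a: "(\<lambda>N. P (Suc n) (Suc N) $ i) \<longlonglongrightarrow> G (Suc n) $ i"
      using G_lim LIMSEQ_Suc by blast
    have b: "(\<lambda>N. P (Suc n) (Suc N) $ i) \<longlonglongrightarrow> T True (G (Suc n)) $ i + T False (G n) $ i"
      unfolding P_Suc vector_add_component
      by (intro tendsto_add T_lim G_lim LIMSEQ_Suc[OF G_lim])
    show ?thesis using LIMSEQ_unique[OF a b] by simp
  qed
  then show ?thesis by (simp add: vec_eq_iff)
qed

lemma G_0: "G 0 = 1"
proof -
  have "G 0 $ i = 1" for i
    using sums_unique[OF sums_single[of 0 "\<lambda>_. 1::real"]]
    by (simp add: G_def FF_0_comp)
  then show ?thesis by (simp add: vec_eq_iff)
qed

lemma T_fix0: assumes "T True y = y" shows "y = 0"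
proof -
  obtain i0 where i0: "\<And>i. \<bar>y$i\<bar> \<le> \<bar>y$i0\<bar>" using ex_argmax[of "\<lambda>i. \<bar>y$i\<bar>"] by auto
  have le: "(\<Sum>j\<in>UNIV. K$i0$j * y$j) \<le> \<bar>y$i0\<bar>"
    by (rule Kavg_le) (metis abs_ge_self i0 order.trans)
  have ge: "- \<bar>y$i0\<bar> \<le> (\<Sum>j\<in>UNIV. K$i0$j * y$j)"
    by (rule Kavg_ge) (metis abs_le_D2 i0 minus_le_iff)
  have "y$i0 = p i0 * (\<Sum>j\<in>UNIV. K$i0$j * y$j)"
    using assms T_comp[of True y i0] by (simp add: pw_def)
  then have "\<bar>y$i0\<bar> \<le> p i0 * \<bar>y$i0\<bar>"
    using le ge p0[of i0] by (simp add: abs_mult abs_le_iff mult_left_mono)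
  then have "\<bar>y$i0\<bar> = 0" using p1[of i0] p0[of i0]
    by (smt (verit) mult_le_cancel_right1 abs_ge_zero)
  then show ?thesis using i0 by (simp add: vec_eq_iff)
qed

lemma T_11: "T True 1 + T False 1 = 1"
  by (simp add: vec_eq_iff T_1 pw_def)

lemma G_eq1: "G n = 1"
proof (induction n)
  case 0 then show ?case by (rule G_0)
next
  case (Suc n)
  have "G (Suc n) - 1 = T True (G (Suc n)) + T False 1 - (T True 1 + T False 1)"
    using G_Suc[of n] T_11 Suc.IH by simp
  also have "\<dots> = T True (G (Suc n) - 1)" by (simp add: T_diff algebra_simps)
  finally have "T True (G (Suc n) - 1) = G (Suc n) - 1" by simp
  then show ?case using T_fix0 by fastforce
qed

lemma Q_Suc: "Q (Suc n) (Suc N) = T True (Q (Suc n) N + P (Suc n) N) + T False (Q n (Suc N))"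
proof -
  have "Q (Suc n) (Suc N) = (\<Sum>k<N. real (Suc k) *\<^sub>R FF (Suc n) (Suc k))"
    unfolding Q_def by (simp add: sum.lessThan_Suc_shift del: sum.lessThan_Suc)
  also have "\<dots> = (\<Sum>k<N. real (Suc k) *\<^sub>R T True (FF (Suc n) k) + real (Suc k) *\<^sub>R T False (FF n (Suc k)))"
    by (simp add: FF_SucSuc scaleR_right_distrib)
  also have "\<dots> = T True (\<Sum>k<N. real (Suc k) *\<^sub>R FF (Suc n) k) + T False (\<Sum>k<N. real (Suc k) *\<^sub>R FF n (Suc k))"
    by (simp add: T_sum T_scaleR sum.distrib)
  also have "(\<Sum>k<N. real (Suc k) *\<^sub>R FF (Suc n) k) = Q (Suc n) N + P (Suc n) N"
    by (simp add: Q_def P_def scaleR_left_distrib sum.distrib)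
  also have "(\<Sum>k<N. real (Suc k) *\<^sub>R FF n (Suc k)) = Q n (Suc N)"
    unfolding Q_def by (simp add: sum.lessThan_Suc_shift del: sum.lessThan_Suc)
  finally show ?thesis .
qed

lemma Q_comp: "Q n N $ i = (\<Sum>k<N. real k * FF n k $ i)"
  by (simp add: Q_def sum_component)

lemma Q_mono: "Q n N $ i \<le> Q n (Suc N) $ i"
  by (simp add: Q_comp FF_nonneg)

lemma bound_lemma:
  assumes "\<And>i. y$i \<le> T True y $ i + c"
  shows "y$i \<le> (\<Sum>j\<in>UNIV. \<bar>c\<bar> / (1 - p j))"
proof -
  obtain i0 where i0: "\<And>i. y$i \<le> y$i0" using ex_argmax[of "\<lambda>i. y$i"] by auto
  have "T True y $ i0 \<le> p i0 * y$i0"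
    unfolding T_comp pw_def using p0[of i0] by (simp add: Kavg_le i0 mult_left_mono)
  then have "(1 - p i0) * y$i0 \<le> \<bar>c\<bar>" using assms[of i0] by (simp add: algebra_simps)
  then have "y$i0 \<le> \<bar>c\<bar> / (1 - p i0)" using p1[of i0] by (simp add: pos_le_divide_eq mult.commute)
  also have "\<dots> \<le> (\<Sum>j\<in>UNIV. \<bar>c\<bar> / (1 - p j))"
    by (rule member_le_sum) (use p1 in \<open>auto intro: divide_nonneg_pos simp: less_imp_le\<close>)
  finally show ?thesis using i0[of i] by simp
qed

lemma Q_bound: "\<exists>M. \<forall>N i. Q n N $ i \<le> M"
proof (induction n)
  case 0
  show ?case by (rule exI[of _ 0]) (simp add: Q_comp FF_0_comp)
next
  case (Suc n)
  then obtain M' where M': "\<And>N i. Q n N $ i \<le> M'" by blast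
  define c where "c = 1 + \<bar>M'\<bar>"
  have "Q (Suc n) N $ i \<le> (\<Sum>j\<in>UNIV. \<bar>c\<bar> / (1 - p j))" for N i
  proof (rule bound_lemma)
    fix i
    have "T True (P (Suc n) N) $ i \<le> T True 1 $ i" by (intro T_mono) (simp add: P_le1)
    then have a: "T True (P (Suc n) N) $ i \<le> 1" using p1[of i] by (simp add: T_1 pw_def)
    have "T False (Q n (Suc N)) $ i \<le> T False (M' *\<^sub>R 1) $ i" by (intro T_mono) (simp add: M')
    moreover have "T False (M' *\<^sub>R 1) $ i = M' * (1 - p i)"
      unfolding T_scaleR by (simp add: T_1 pw_def)
    moreover have "M' * (1 - p i) \<le> \<bar>M'\<bar> * (1 - p i)"
      using p1[of i] by (intro mult_right_mono) auto
    moreover have "\<bar>M'\<bar> * (1 - p i) \<le> \<bar>M'\<bar>"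
      using p0[of i] by (simp add: mult_left_le)
    ultimately have b: "T False (Q n (Suc N)) $ i \<le> \<bar>M'\<bar>" by linarith
    have "Q (Suc n) N $ i \<le> Q (Suc n) (Suc N) $ i" by (rule Q_mono)
    also have "\<dots> = T True (Q (Suc n) N) $ i + T True (P (Suc n) N) $ i + T False (Q n (Suc N)) $ i"
      by (simp add: Q_Suc T_add)
    finally show "Q (Suc n) N $ i \<le> T True (Q (Suc n) N) $ i + c" using a b c_def by simp
  qed
  then show ?case by blast
qed

lemma summable_kFF: "summable (\<lambda>k. real k * FF n k $ i)"
proof -
  obtain M where "\<And>N i. Q n N $ i \<le> M" using Q_bound by blast
  then show ?thesis
    by (intro summableI_nonneg_bounded[where x=M]) (simp_all add: FF_nonneg Q_comp[symmetric])
qed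

lemma H_lim: "(\<lambda>N. Q n N $ i) \<longlonglongrightarrow> H n $ i"
  using summable_sums[OF summable_kFF[of n i]] unfolding sums_def Q_comp H_def by simp

lemma H_Suc: "H (Suc n) = T True (H (Suc n)) + T True 1 + T False (H n)"
proof -
  have "H (Suc n) $ i = (T True (H (Suc n) + G (Suc n)) + T False (H n)) $ i" for i
  proof -
    have a: "(\<lambda>N. Q (Suc n) (Suc N) $ i) \<longlonglongrightarrow> H (Suc n) $ i"
      using H_lim LIMSEQ_Suc by blast
    have b: "(\<lambda>N. Q (Suc n) (Suc N) $ i) \<longlonglongrightarrow> T True (H (Suc n) + G (Suc n)) $ i + T False (H n) $ i"
      unfolding Q_Suc vector_add_component
      by (intro tendsto_add T_lim H_lim G_lim LIMSEQ_Suc[OF H_lim]) (simp add: tendsto_add H_lim G_lim)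
    show ?thesis using LIMSEQ_unique[OF a b] by simp
  qed
  then show ?thesis by (simp add: vec_eq_iff G_eq1 T_add)
qed

lemma H_0: "H 0 = 0"
  by (simp add: H_def FF_0_comp vec_eq_iff)

lemma expect_H:
  assumes "prob_vector \<eta>"
  shows "expect_Sn K p \<eta> n = \<eta> \<bullet> H n"
proof -
  have e: "(\<lambda>k. real k * prob_Sn K p \<eta> n k) = (\<lambda>k. \<Sum>i\<in>UNIV. \<eta>$i * (real k * FF n k $ i))"
    by (simp add: prob_Sn_FF[OF assms] inner_vec_def sum_distrib_left mult_ac)
  have "(\<lambda>k. \<Sum>i\<in>UNIV. \<eta>$i * (real k * FF n k $ i)) sums (\<Sum>i\<in>UNIV. \<eta>$i * H n $ i)"
    by (intro sums_sum sums_mult) (simp add: H_def summable_sums summable_kFF)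
  then show ?thesis unfolding expect_Sn_def e by (simp add: sums_unique[symmetric] inner_vec_def)
qed

end



lemma closed_rtrancl:
  assumes "closed_set K C" "i \<in> C" "(i,k) \<in> (step_rel K)\<^sup>*"
  shows "k \<in> C"
  using assms(3,2)
proof (induction rule: rtrancl_induct)
  case base then show ?case .
next
  case (step y z) then show ?case using assms(1) by (auto simp: closed_set_def step_rel_def)
qed

lemma reach_closed:
  fixes K :: "real^'r::finite^'r"
  assumes "closed_set K C0" "irreducible_set K C0"
    and uniq: "\<And>C. closed_set K C \<Longrightarrow> irreducible_set K C \<Longrightarrow> C = C0"
  shows "\<exists>c\<in>C0. (i,c) \<in> (step_rel K)\<^sup>*"
proof -
  define S where "S = step_rel K"
  define R where "R j = {k. (j,k) \<in> S\<^sup>*}" for j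
  obtain j where j: "(i,j) \<in> S\<^sup>*" and jmin: "\<And>j'. (i,j') \<in> S\<^sup>* \<Longrightarrow> card (R j) \<le> card (R j')"
    using ex_has_least_nat[of "\<lambda>j. (i,j) \<in> S\<^sup>*" i "\<lambda>j. card (R j)"] by auto
  have cl: "closed_set K (R j)"
    unfolding closed_set_def R_def
  proof (intro conjI ballI allI impI)
    show "{k. (j, k) \<in> S\<^sup>*} \<noteq> {}" by auto
  next
    fix a b assume "a \<in> {k. (j, k) \<in> S\<^sup>*}" "0 < K $ a $ b"
    then show "b \<in> {k. (j, k) \<in> S\<^sup>*}" by (auto simp: S_def step_rel_def intro: rtrancl_into_rtrancl)
  qed
  have ir: "irreducible_set K (R j)"
    unfolding irreducible_set_def
  proof (intro ballI)
    fix a b assume a: "a \<in> R j" and b: "b \<in> R j"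
    have sub: "R a \<subseteq> R j" using a by (auto simp: R_def)
    have "(i,a) \<in> S\<^sup>*" using j a by (auto simp: R_def)
    then have "card (R j) \<le> card (R a)" by (rule jmin)
    then have "R a = R j" using sub card_mono[OF finite sub] by (intro card_subset_eq) auto
    then show "(a,b) \<in> (step_rel K)\<^sup>*" using b by (auto simp: R_def S_def)
  qed
  have "R j = C0" using uniq[OF cl ir] .
  moreover have "j \<in> R j" by (simp add: R_def)
  ultimately show ?thesis using j S_def by blast
qed

context chainp
begin

definition Bm :: "real^'r^'r" where "Bm = (\<chi> i j. p i * K$i$j)"
definition Cm :: "real^'r^'r" where "Cm = (\<chi> i j. (1 - p i) * K$i$j)"
definition Phim :: "real^'r^'r" where "Phim = matrix_inv (mat 1 - Bm) ** Cm"

lemma T_True_Bm: "T True x = Bm *v x"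
  by (simp add: vec_eq_iff T_comp Bm_def matrix_vector_mult_def pw_def sum_distrib_left mult.assoc)

lemma T_False_Cm: "T False x = Cm *v x"
  by (simp add: vec_eq_iff T_comp Cm_def matrix_vector_mult_def pw_def sum_distrib_left mult.assoc)

lemma IB_inv: "invertible (mat 1 - Bm)"
proof -
  have "\<forall>x. (mat 1 - Bm) *v x = 0 \<longrightarrow> x = 0"
  proof (intro allI impI)
    fix x assume "(mat 1 - Bm) *v x = 0"
    then have "T True x = x"
      by (simp add: matrix_vector_mult_diff_rdistrib T_True_Bm)
    then show "x = 0" by (rule T_fix0)
  qed
  then show ?thesis by (simp add: invertible_left_inverse matrix_left_invertible_ker)
qed

lemma Phi_eq: "Phim *v x = T True (Phim *v x) + T False x"
proof -
  have inv: "(mat 1 - Bm) ** matrix_inv (mat 1 - Bm) = mat 1"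
    using IB_inv unfolding matrix_inv_def invertible_def by (rule someI2_ex) auto
  have "(mat 1 - Bm) *v (Phim *v x) = ((mat 1 - Bm) ** matrix_inv (mat 1 - Bm)) ** Cm *v x"
    by (simp add: Phim_def matrix_vector_mul_assoc matrix_mul_assoc)
  also have "\<dots> = T False x" by (simp add: inv matrix_mul_lid T_False_Cm)
  finally have "(mat 1 - Bm) *v (Phim *v x) = T False x" .
  then show ?thesis
    by (simp add: matrix_vector_mult_diff_rdistrib T_True_Bm algebra_simps)
qed

lemma Phi_unique:
  assumes "y = T True y + T False x"
  shows "y = Phim *v x"
proof -
  have "T True (y - Phim *v x) = y - Phim *v x"
    using assms Phi_eq[of x] by (simp add: T_diff algebra_simps)
       (metis add_diff_cancel_right' diff_add_eq)
  then show ?thesis using T_fix0 by fastforce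
qed

lemma Phi_1: "Phim *v 1 = 1"
  by (rule Phi_unique[symmetric]) (simp add: T_11)

lemma Phi_nonneg:
  assumes "\<And>j. 0 \<le> x$j"
  shows "0 \<le> (Phim *v x) $ i"
proof -
  define y where "y = Phim *v x"
  obtain i0 where i0: "\<And>i. y$i0 \<le> y$i" using ex_argmin[of "\<lambda>i. y$i"] by auto
  have "y$i0 = T True y $ i0 + T False x $ i0" using Phi_eq[of x] unfolding y_def
    by (metis vector_add_component)
  moreover have "p i0 * y$i0 \<le> T True y $ i0"
    unfolding T_comp pw_def using p0[of i0] by (simp add: Kavg_ge i0 mult_left_mono)
  moreover have "0 \<le> T False x $ i0" by (rule T_nonneg) (rule assms)
  ultimately have "(1 - p i0) * y$i0 \<ge> 0" by (simp add: algebra_simps)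
  then have "y$i0 \<ge> 0" using p1[of i0] by (simp add: zero_le_mult_iff)
  then show ?thesis using i0[of i] y_def by simp
qed

lemma Phi_lower:
  assumes "\<And>j. m \<le> x$j"
  shows "m \<le> (Phim *v x) $ i"
proof -
  have "0 \<le> (Phim *v (x - m *\<^sub>R 1)) $ i" by (rule Phi_nonneg) (simp add: assms)
  then show ?thesis by (simp add: matrix_vector_mult_diff_distrib matrix_vector_mult_scaleR Phi_1)
qed

lemma Phi_upper:
  assumes "\<And>j. x$j \<le> M"
  shows "(Phim *v x) $ i \<le> M"
proof -
  have "0 \<le> (Phim *v (M *\<^sub>R 1 - x)) $ i" by (rule Phi_nonneg) (simp add: assms)
  then show ?thesis by (simp add: matrix_vector_mult_diff_distrib matrix_vector_mult_scaleR Phi_1)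
qed

definition ej :: "'r \<Rightarrow> real^'r" where "ej j0 = (\<chi> i. if i = j0 then 1 else 0)"

lemma contraction:
  assumes d: "\<And>i. \<delta> \<le> (Phim *v ej j0) $ i" and x: "\<And>i. m \<le> x$i" "\<And>i. x$i \<le> M"
  shows "m + \<delta> * (x$j0 - m) \<le> (Phim *v x) $ i" "(Phim *v x) $ i \<le> M - \<delta> * (M - x$j0)"
proof -
  have "0 \<le> (Phim *v (x - m *\<^sub>R 1 - (x$j0 - m) *\<^sub>R ej j0)) $ i"
    by (rule Phi_nonneg) (simp add: ej_def x)
  then have "m + (x$j0 - m) * (Phim *v ej j0) $ i \<le> (Phim *v x) $ i"
    by (simp add: matrix_vector_mult_diff_distrib matrix_vector_mult_scaleR Phi_1)
  moreover have "\<delta> * (x$j0 - m) \<le> (x$j0 - m) * (Phim *v ej j0) $ i"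
    using mult_right_mono[OF d[of i], of "x$j0 - m"] x(1)[of j0] by (simp add: mult.commute)
  ultimately show "m + \<delta> * (x$j0 - m) \<le> (Phim *v x) $ i" by linarith
  have "0 \<le> (Phim *v (M *\<^sub>R 1 - x - (M - x$j0) *\<^sub>R ej j0)) $ i"
    by (rule Phi_nonneg) (simp add: ej_def x)
  then have "(Phim *v x) $ i \<le> M - (M - x$j0) * (Phim *v ej j0) $ i"
    by (simp add: matrix_vector_mult_diff_distrib matrix_vector_mult_scaleR Phi_1)
  moreover have "\<delta> * (M - x$j0) \<le> (M - x$j0) * (Phim *v ej j0) $ i"
    using mult_right_mono[OF d[of i], of "M - x$j0"] x(2)[of j0] by (simp add: mult.commute)
  ultimately show "(Phim *v x) $ i \<le> M - \<delta> * (M - x$j0)" by linarith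
qed

lemma zero_closed:
  assumes "(Phim *v ej j0) $ i = 0" "0 < K$i$j"
  shows "(Phim *v ej j0) $ j = 0" "K$i$j0 = 0"
proof -
  define y where "y = Phim *v ej j0"
  have ynn: "\<And>k. 0 \<le> y$k" unfolding y_def by (rule Phi_nonneg) (simp add: ej_def)
  have "y$i = T True y $ i + T False (ej j0) $ i" using Phi_eq[of "ej j0"] unfolding y_def
    by (metis vector_add_component)
  then have e: "p i * (\<Sum>k\<in>UNIV. K$i$k * y$k) + (1 - p i) * K$i$j0 = 0"
    using assms(1) by (simp add: T_comp pw_def y_def ej_def if_distrib cong: if_cong)
  have s0: "0 \<le> (\<Sum>k\<in>UNIV. K$i$k * y$k)" by (intro sum_nonneg mult_nonneg_nonneg K_nonneg ynn)
  have "0 \<le> K$i$j0" by (rule K_nonneg)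
  then have a: "(\<Sum>k\<in>UNIV. K$i$k * y$k) = 0" and b: "K$i$j0 = 0"
    using e s0 p0[of i] p1[of i]
    by (smt (verit) mult_nonneg_nonneg mult_pos_pos)+
  have "K$i$j * y$j = 0" using a sum_nonneg_eq_0_iff[of UNIV "\<lambda>k. K$i$k * y$k"]
    by (simp add: K_nonneg ynn)
  then show "(Phim *v ej j0) $ j = 0" using assms(2) y_def by simp
  show "K$i$j0 = 0" by (rule b)
qed

end

locale chainp2 = chainp K p for K :: "real^'r::finite^'r" and p +
  fixes \<mu> :: "real^'r"
  assumes uci: "unique_closed_irreducible K" and stat: "stationary K \<mu>"
begin

lemma doeblin: "\<exists>j0 \<delta>. 0 < \<delta> \<and> \<delta> \<le> 1/2 \<and> (\<forall>i. \<delta> \<le> (Phim *v ej j0) $ i)"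
proof -
  obtain C0 where C0: "closed_set K C0" "irreducible_set K C0"
    and uniq: "\<And>C. closed_set K C \<Longrightarrow> irreducible_set K C \<Longrightarrow> C = C0"
    using uci unfolding unique_closed_irreducible_def by blast
  obtain j0 where j0: "j0 \<in> C0" using C0(1) by (auto simp: closed_set_def)
  have "\<exists>j'. 0 < K$j0$j'"
  proof (rule ccontr)
    assume "\<not> ?thesis"
    then have "K$j0$j' = 0" for j' using K_nonneg[of j0 j'] by (metis not_less order_antisym)
    then show False using K_row[of j0] by simp
  qed
  then obtain j' where j': "0 < K$j0$j'" by blast
  have j'C: "j' \<in> C0" using C0(1) j0 j' by (auto simp: closed_set_def)
  have "(j', j0) \<in> (step_rel K)\<^sup>*" using C0(2) j'C j0 by (auto simp: irreducible_set_def)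
  moreover have "(j0, j') \<in> step_rel K" using j' by (simp add: step_rel_def)
  ultimately have "(j0, j0) \<in> (step_rel K)\<^sup>+" by (meson rtrancl_into_trancl2)
  then have "\<exists>k. (j0,k) \<in> (step_rel K)\<^sup>* \<and> (k,j0) \<in> step_rel K" by (rule tranclD2)
  then obtain k where k1: "(j0,k) \<in> (step_rel K)\<^sup>*" and k2: "(k,j0) \<in> step_rel K"
    by blast
  have kC: "k \<in> C0" by (rule closed_rtrancl[OF C0(1) j0 k1])
  have kpos: "0 < K$k$j0" using k2 by (simp add: step_rel_def)
  define y where "y = Phim *v ej j0"
  have ynn: "\<And>k. 0 \<le> y$k" unfolding y_def by (rule Phi_nonneg) (simp add: ej_def)
  have ypos: "0 < y$i" for i
  proof (rule ccontr)
    assume "\<not> 0 < y$i"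
    then have yi: "y$i = 0" using ynn[of i] by simp
    have Z: "y$b = 0" if "(a,b) \<in> (step_rel K)\<^sup>*" "y$a = 0" for a b
      using that
    proof (induction rule: rtrancl_induct)
      case base then show ?case .
    next
      case (step b c) then show ?case
        using zero_closed(1)[of j0 b c] by (simp add: step_rel_def y_def)
    qed
    obtain c where c: "c \<in> C0" "(i,c) \<in> (step_rel K)\<^sup>*" using reach_closed[OF C0 uniq] by blast
    have "(c,k) \<in> (step_rel K)\<^sup>*" using C0(2) c(1) kC by (auto simp: irreducible_set_def)
    then have "(i,k) \<in> (step_rel K)\<^sup>*" using c(2) by simp
    then have "y$k = 0" using Z yi by blast
    then have "K$k$j0 = 0" using zero_closed(2)[of j0 k j'] j' unfolding y_def
      by (metis zero_closed(2) kpos)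
    then show False using kpos by simp
  qed
  obtain i0 where i0: "\<And>i. y$i0 \<le> y$i" using ex_argmin[of "\<lambda>i. y$i"] by auto
  define \<delta> where "\<delta> = min (y$i0) (1/2)"
  have "0 < \<delta>" "\<delta> \<le> 1/2" "\<forall>i. \<delta> \<le> y$i" using ypos i0 by (auto simp: \<delta>_def min.coboundedI1)
  then show ?thesis unfolding y_def by blast
qed

end



context chainp2
begin

definition pb :: real where "pb = pbar \<mu> p"
definition pv :: "real^'r" where "pv = (\<chi> i. p i)"
definition lam :: real where "lam = pb / (1 - pb)"
definition nu :: "real^'r \<Rightarrow> real" where "nu x = (\<Sum>i\<in>UNIV. \<mu>$i * (1 - p i) * (K *v x)$i)"
definition Mmat :: "real^'r^'r" where
  "Mmat = mat 1 - K + (1 / (1 - pbar \<mu> p)) *\<^sub>R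
                    outer_prod (1 - (\<chi> i. p i)) (\<mu> v* (diag_mat (\<lambda>i. 1 - p i) ** K))"

lemma mu_nonneg: "0 \<le> \<mu>$i" using stat by (simp add: stationary_def prob_vector_def)
lemma mu_sum: "(\<Sum>i\<in>UNIV. \<mu>$i) = 1" using stat by (simp add: stationary_def prob_vector_def)
lemma mu_stat: "(\<Sum>i\<in>UNIV. \<mu>$i * K$i$j) = \<mu>$j"
proof -
  have "\<mu> v* K = \<mu>" using stat by (simp add: stationary_def)
  then have "(\<mu> v* K) $ j = \<mu> $ j" by simp
  then show ?thesis by (simp add: vector_matrix_mult_def mult.commute)
qed

lemma mu_K: "(\<Sum>i\<in>UNIV. \<mu>$i * (K *v y)$i) = (\<Sum>j\<in>UNIV. \<mu>$j * y$j)"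
proof -
  have "(\<Sum>i\<in>UNIV. \<mu>$i * (K *v y)$i) = (\<Sum>i\<in>UNIV. \<Sum>j\<in>UNIV. \<mu>$i * K$i$j * y$j)"
    by (simp add: Kv sum_distrib_left mult.assoc)
  also have "\<dots> = (\<Sum>j\<in>UNIV. \<Sum>i\<in>UNIV. \<mu>$i * K$i$j * y$j)" by (rule sum.swap)
  also have "\<dots> = (\<Sum>j\<in>UNIV. \<mu>$j * y$j)" by (simp add: sum_distrib_right[symmetric] mu_stat)
  finally show ?thesis .
qed

lemma pb_eq: "pb = (\<Sum>i\<in>UNIV. \<mu>$i * p i)"
  by (simp add: pb_def pbar_def inner_vec_def)

lemma one_m_pb: "1 - pb = (\<Sum>i\<in>UNIV. \<mu>$i * (1 - p i))"
proof -
  have "(\<Sum>i\<in>UNIV. \<mu>$i * (1 - p i)) = (\<Sum>i\<in>UNIV. \<mu>$i) - (\<Sum>i\<in>UNIV. \<mu>$i * p i)"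
    by (simp add: right_diff_distrib sum_subtractf)
  then show ?thesis by (simp add: mu_sum pb_eq)
qed

lemma mu1p_nonneg: "0 \<le> \<mu>$j * (1 - p j)"
  using mu_nonneg[of j] p1[of j] by simp

lemma pb_lt1: "0 < 1 - pb"
proof -
  obtain i where "0 < \<mu>$i"
  proof (rule ccontr)
    assume "\<not> thesis"
    then have "\<forall>i. \<mu>$i \<le> 0" using that by (meson not_less)
    then have "\<forall>i. \<mu>$i = 0" using mu_nonneg by (meson order_antisym)
    then show False using mu_sum by simp
  qed
  then have pos: "0 < \<mu>$i * (1 - p i)" using p1[of i] by simp
  have "0 < (\<Sum>i\<in>UNIV. \<mu>$i * (1 - p i))"
    by (rule sum_pos2[where i=i]) (simp_all add: pos mu1p_nonneg)
  then show ?thesis using one_m_pb by simp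
qed

lemma nu_inv:
  assumes "y = T True y + T False x"
  shows "nu y = nu x"
proof -
  have c: "y$i = p i * (K *v y)$i + (1 - p i) * (K *v x)$i" for i
  proof -
    have "y$i = T True y $ i + T False x $ i" using arg_cong[OF assms, of "\<lambda>v. v$i"] by simp
    then show ?thesis by (simp add: T_def pw_def)
  qed
  have 1: "(\<Sum>i\<in>UNIV. \<mu>$i * y$i) = (\<Sum>i\<in>UNIV. \<mu>$i * (p i * (K *v y)$i)) + nu x"
    by (simp add: c nu_def ring_distribs sum.distrib mult.assoc)
  have 2: "(\<Sum>i\<in>UNIV. \<mu>$i * (K *v y)$i) = (\<Sum>i\<in>UNIV. \<mu>$i * (p i * (K *v y)$i)) + nu y"
    by (simp add: nu_def ring_distribs sum.distrib mult.assoc sum_subtractf)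
  show ?thesis using 1 2 mu_K[of y] by simp
qed

lemma nu_add: "nu (x + y) = nu x + nu y"
  by (simp add: nu_def matrix_vector_right_distrib ring_distribs sum.distrib)
lemma nu_diff: "nu (x - y) = nu x - nu y"
  by (simp add: nu_def matrix_vector_mult_diff_distrib ring_distribs sum_subtractf)
lemma nu_scale: "nu (c *\<^sub>R x) = c * nu x"
  by (simp add: nu_def matrix_vector_mult_scaleR sum_distrib_left mult_ac)
lemma nu_1: "nu 1 = 1 - pb"
  by (simp add: nu_def K1 one_m_pb)

lemma nu_lower: "(\<And>i. m \<le> x$i) \<Longrightarrow> m * (1 - pb) \<le> nu x"
proof -
  assume a: "\<And>i. m \<le> x$i"
  have "m * (1 - pb) = (\<Sum>i\<in>UNIV. \<mu>$i * (1 - p i) * m)"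
    by (simp add: one_m_pb sum_distrib_left sum_distrib_right mult_ac)
  also have "\<dots> \<le> nu x" unfolding nu_def
  proof (rule sum_mono)
    fix i
    show "\<mu>$i * (1 - p i) * m \<le> \<mu>$i * (1 - p i) * (K *v x)$i"
      using mult_left_mono[OF Kavg_ge[OF a] mu1p_nonneg[of i]] by (simp add: Kv)
  qed
  finally show ?thesis .
qed

lemma nu_upper: "(\<And>i. x$i \<le> M) \<Longrightarrow> nu x \<le> M * (1 - pb)"
proof -
  assume a: "\<And>i. x$i \<le> M"
  have "nu x \<le> (\<Sum>i\<in>UNIV. \<mu>$i * (1 - p i) * M)" unfolding nu_def
  proof (rule sum_mono)
    fix i
    show "\<mu>$i * (1 - p i) * (K *v x)$i \<le> \<mu>$i * (1 - p i) * M"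
      using mult_left_mono[OF Kavg_le[OF a] mu1p_nonneg[of i]] by (simp add: Kv)
  qed
  also have "\<dots> = M * (1 - pb)"
    by (simp add: one_m_pb sum_distrib_left sum_distrib_right mult_ac)
  finally show ?thesis .
qed

lemma if0_mult: "(if PP then a else 0) * b = (if PP then a * b else (0::real))"
  by simp

lemma diagK: "(diag_mat (\<lambda>i. 1 - p i) ** K) $ i $ j = (1 - p i) * K$i$j"
  by (simp add: matrix_matrix_mult_def diag_mat_def if0_mult)

lemma w_inner: "(\<mu> v* (diag_mat (\<lambda>i. 1 - p i) ** K)) \<bullet> x = nu x"
proof -
  have "(\<mu> v* (diag_mat (\<lambda>i. 1 - p i) ** K)) \<bullet> x = (\<Sum>j\<in>UNIV. \<Sum>i\<in>UNIV. \<mu>$i * (1 - p i) * K$i$j * x$j)"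
    by (simp add: inner_vec_def vector_matrix_mult_def diagK sum_distrib_right sum_distrib_left mult_ac)
  also have "\<dots> = (\<Sum>i\<in>UNIV. \<Sum>j\<in>UNIV. \<mu>$i * (1 - p i) * K$i$j * x$j)" by (rule sum.swap)
  also have "\<dots> = nu x" by (simp add: nu_def Kv sum_distrib_left mult_ac)
  finally show ?thesis .
qed

lemma outer_mv: "outer_prod u w *v x = (w \<bullet> x) *\<^sub>R u"
  by (simp add: vec_eq_iff outer_prod_def matrix_vector_mult_def inner_vec_def sum_distrib_left mult_ac)

lemma Mv: "Mmat *v x = x - K *v x + (nu x / (1 - pb)) *\<^sub>R (1 - pv)"
  unfolding Mmat_def
  by (simp add: matrix_vector_mult_add_rdistrib matrix_vector_mult_diff_rdistrib
      scaleR_matrix_vector_assoc[symmetric] outer_mv w_inner pb_def pv_def)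

end



context chainp2
begin

lemma TT_K: "T True x $ i + T False x $ i = (K *v x) $ i"
  by (simp add: T_def pw_def algebra_simps)

lemma sum_split3:
  "(\<Sum>i\<in>UNIV. \<mu>$i * (u i - v i + a * w i)) = (\<Sum>i\<in>UNIV. \<mu>$i * u i) - (\<Sum>i\<in>UNIV. \<mu>$i * v i) + a * (\<Sum>i\<in>UNIV. \<mu>$i * w i)"
  by (simp add: algebra_simps sum.distrib sum_subtractf sum_distrib_left)

lemma fixed_zero:
  assumes "x = Phim *v x" "nu x = 0"
  shows "x = 0"
proof -
  obtain j0 \<delta> where d: "0 < \<delta>" "\<forall>i. \<delta> \<le> (Phim *v ej j0) $ i" using doeblin by blast
  obtain iM where iM: "\<And>i. x$i \<le> x$iM" using ex_argmax[of "\<lambda>i. x$i"] by auto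
  obtain im where im: "\<And>i. x$im \<le> x$i" using ex_argmin[of "\<lambda>i. x$i"] by auto
  have eqx: "Phim *v x = x" using assms(1) by (rule sym)
  have "(Phim *v x) $ iM \<le> x$iM - \<delta> * (x$iM - x$j0)"
    by (rule contraction(2)[where m="x$im"]) (use d im iM in auto)
  then have "\<delta> * (x$iM - x$j0) \<le> 0" unfolding eqx by simp
  then have 1: "x$iM \<le> x$j0" using d(1) by (simp add: mult_le_0_iff)
  have "x$im + \<delta> * (x$j0 - x$im) \<le> (Phim *v x) $ im"
    by (rule contraction(1)[where M="x$iM"]) (use d im iM in auto)
  then have "\<delta> * (x$j0 - x$im) \<le> 0" unfolding eqx by simp
  then have 2: "x$j0 \<le> x$im" using d(1) by (simp add: mult_le_0_iff)
  have "x$im * (1 - pb) \<le> 0" using nu_lower[of "x$im" x] im assms(2) by simp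
  then have 3: "x$im \<le> 0" using pb_lt1 by (simp add: mult_le_0_iff)
  have "0 \<le> x$iM * (1 - pb)" using nu_upper[of x "x$iM"] iM assms(2) by simp
  then have 4: "0 \<le> x$iM" using pb_lt1 by (simp add: zero_le_mult_iff)
  have "x$i = 0$i" for i using iM[of i] im[of i] 1 2 3 4 by simp
  then show ?thesis by (simp add: vec_eq_iff)
qed

lemma M_inj:
  assumes "Mmat *v x = 0"
  shows "x = 0"
proof -
  have c: "x$i - (K *v x)$i + nu x / (1 - pb) * (1 - p i) = 0" for i
    using arg_cong[OF assms[unfolded Mv], of "\<lambda>v. v$i"] by (simp add: pv_def)
  have "(\<Sum>i\<in>UNIV. \<mu>$i * (x$i - (K *v x)$i + nu x / (1 - pb) * (1 - p i))) = 0"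
    by (intro sum.neutral ballI) (metis c mult_zero_right)
  then have "(\<Sum>i\<in>UNIV. \<mu>$i * x$i) - (\<Sum>i\<in>UNIV. \<mu>$i * (K *v x)$i) + nu x / (1 - pb) * (\<Sum>i\<in>UNIV. \<mu>$i * (1 - p i)) = 0"
    by (rule trans[OF sym[OF sum_split3[of "\<lambda>i. x$i" "\<lambda>i. (K *v x)$i" "nu x / (1 - pb)" "\<lambda>i. 1 - p i"]]])
  then have "nu x / (1 - pb) * (1 - pb) = 0" by (simp add: mu_K one_m_pb)
  then have nu0: "nu x = 0" using pb_lt1 by simp
  have "x$i = (K *v x)$i" for i using c[of i] nu0 by simp
  then have "x = T True x + T False x" by (simp add: vec_eq_iff TT_K)
  then have "x = Phim *v x" by (rule Phi_unique)
  then show ?thesis using fixed_zero nu0 by blast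
qed

lemma M_invertible: "invertible Mmat"
  using M_inj by (simp add: invertible_left_inverse matrix_left_invertible_ker)

definition rr :: "real^'r" where "rr = r_vec K p \<mu>"

lemma rr_eq: "rr = matrix_inv Mmat *v pv - lam *\<^sub>R 1"
  by (simp add: rr_def r_vec_def Let_def Mmat_def pv_def lam_def pb_def)

lemma rr_props: "nu rr = 0" "\<And>i. rr$i - (K *v rr)$i = p i - lam * (1 - p i)"
proof -
  have inv: "Mmat ** matrix_inv Mmat = mat 1"
    using M_invertible unfolding matrix_inv_def invertible_def by (rule someI2_ex) auto
  define z where "z = rr + lam *\<^sub>R 1"
  have Mz: "Mmat *v z = pv"
    by (simp add: z_def rr_eq matrix_vector_mul_assoc inv)
  have cz: "z$i - (K *v z)$i + nu z / (1 - pb) * (1 - p i) = p i" for i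
    using arg_cong[OF Mz[unfolded Mv], of "\<lambda>v. v$i"] by (simp add: pv_def)
  have Kz: "(K *v z)$i = (K *v rr)$i + lam" for i
    by (simp add: z_def matrix_vector_right_distrib matrix_vector_mult_scaleR K1)
  have nuz: "nu z = nu rr + lam * (1 - pb)" by (simp add: z_def nu_add nu_scale nu_1)
  have lam1: "lam * (1 - pb) = pb" using pb_lt1 by (simp add: lam_def)
  have c: "rr$i - (K *v rr)$i + (nu rr / (1 - pb) + lam) * (1 - p i) = p i" for i
  proof -
    have "nu z / (1 - pb) = nu rr / (1 - pb) + lam" using pb_lt1 by (simp add: nuz add_divide_distrib lam_def)
    then show ?thesis using cz[of i] Kz[of i] by (simp add: z_def)
  qed
  have "(\<Sum>i\<in>UNIV. \<mu>$i * (rr$i - (K *v rr)$i + (nu rr / (1 - pb) + lam) * (1 - p i))) = (\<Sum>i\<in>UNIV. \<mu>$i * p i)"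
    by (simp add: c)
  then have "(\<Sum>i\<in>UNIV. \<mu>$i * rr$i) - (\<Sum>i\<in>UNIV. \<mu>$i * (K *v rr)$i) + (nu rr / (1 - pb) + lam) * (\<Sum>i\<in>UNIV. \<mu>$i * (1 - p i)) = (\<Sum>i\<in>UNIV. \<mu>$i * p i)"
    by (rule trans[OF sym[OF sum_split3[of "\<lambda>i. rr$i" "\<lambda>i. (K *v rr)$i" "nu rr / (1 - pb) + lam" "\<lambda>i. 1 - p i"]]])
  then have "(nu rr / (1 - pb) + lam) * (1 - pb) = (\<Sum>i\<in>UNIV. \<mu>$i * p i)"
    unfolding one_m_pb[symmetric] mu_K by simp
  then have "(nu rr / (1 - pb) + lam) * (1 - pb) = pb" using pb_eq by simp
  then have "nu rr / (1 - pb) * (1 - pb) + lam * (1 - pb) = pb" by (simp only: distrib_right)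
  moreover have "nu rr / (1 - pb) * (1 - pb) = nu rr" using pb_lt1 by simp
  ultimately have "nu rr + lam * (1 - pb) = pb" by simp
  then show nr: "nu rr = 0" using lam1 by simp
  fix i show "rr$i - (K *v rr)$i = p i - lam * (1 - p i)" using c[of i] nr by simp
qed

definition ee :: "nat \<Rightarrow> real^'r" where "ee n = H n - (real n * lam) *\<^sub>R 1 - rr"

lemma ee_Suc: "ee (Suc n) = T True (ee (Suc n)) + T False (ee n)"
proof -
  have "ee (Suc n) $ i = (T True (ee (Suc n)) + T False (ee n)) $ i" for i
  proof -
  have a: "T b (ee m) $ i = T b (H m) $ i - real m * lam * pw b i - T b rr $ i" for b m
    by (simp add: ee_def T_diff T_scaleR T_1)
  have b: "H (Suc n) $ i = T True (H (Suc n)) $ i + p i + T False (H n) $ i"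
    using arg_cong[OF H_Suc[of n], of "\<lambda>v. v$i"] by (simp add: T_1 pw_def)
  have c: "T True rr $ i + T False rr $ i = (K *v rr) $ i" by (rule TT_K)
  have d: "rr$i - (K *v rr)$i = p i - lam * (1 - p i)" by (rule rr_props(2))
  have e: "ee m $ i = H m $ i - real m * lam - rr $ i" for m by (simp add: ee_def)
  show "ee (Suc n) $ i = (T True (ee (Suc n)) + T False (ee n)) $ i"
    unfolding vector_add_component a e using b c d by (simp add: pw_def algebra_simps)
  qed
  then show ?thesis by (simp add: vec_eq_iff)
qed

lemma ee_Phi: "ee (Suc n) = Phim *v ee n"
  using ee_Suc by (rule Phi_unique)

lemma ee_0: "ee 0 = - rr"
  by (simp add: ee_def H_0)

lemma nu_ee: "nu (ee n) = 0"
proof (induction n)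
  case 0 then show ?case using rr_props(1) nu_scale[of "-1" rr] by (simp add: ee_0)
next
  case (Suc n) then show ?case using nu_inv[OF ee_Suc] by simp
qed

end



context chainp2
begin

definition WW :: real where "WW = (\<Sum>i\<in>UNIV. \<bar>rr$i\<bar>)"

lemma WW_ge: "\<bar>rr$i\<bar> \<le> WW"
  unfolding WW_def by (rule member_le_sum) auto

lemma WW_nonneg: "0 \<le> WW"
  using WW_ge[of undefined] by linarith

lemma width:
  assumes d: "0 < \<delta>" "\<delta> \<le> 1/2" "\<forall>i. \<delta> \<le> (Phim *v ej j0)$i"
  shows "\<exists>m M. (\<forall>i. m \<le> ee n $ i \<and> ee n $ i \<le> M) \<and> M - m \<le> (1-\<delta>)^n * (2 * WW)"
proof (induction n)
  case 0
  show ?case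
    by (rule exI[of _ "-WW"], rule exI[of _ WW]) (use WW_ge in \<open>auto simp: ee_0 abs_le_iff\<close>)
next
  case (Suc n)
  then obtain m M where mM: "\<And>i. m \<le> ee n $ i" "\<And>i. ee n $ i \<le> M" and w: "M - m \<le> (1-\<delta>)^n * (2 * WW)"
    by blast
  define m' where "m' = m + \<delta> * (ee n $ j0 - m)"
  define M' where "M' = M - \<delta> * (M - ee n $ j0)"
  have "\<forall>i. m' \<le> ee (Suc n) $ i \<and> ee (Suc n) $ i \<le> M'"
    unfolding ee_Phi m'_def M'_def using contraction[of \<delta> j0 m "ee n" M] d(3) mM by blast
  moreover have "M' - m' \<le> (1-\<delta>)^(Suc n) * (2 * WW)"
  proof -
    have "M' - m' = (1 - \<delta>) * (M - m)" by (simp add: m'_def M'_def algebra_simps)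
    also have "\<dots> \<le> (1 - \<delta>) * ((1-\<delta>)^n * (2 * WW))" using d(2) w by (intro mult_left_mono) auto
    finally show ?thesis by simp
  qed
  ultimately show ?case by blast
qed

lemma ee_abs:
  assumes d: "0 < \<delta>" "\<delta> \<le> 1/2" "\<forall>i. \<delta> \<le> (Phim *v ej j0)$i"
  shows "\<bar>ee n $ i\<bar> \<le> (1-\<delta>)^n * (2 * WW)"
proof -
  obtain m M where mM: "\<And>i. m \<le> ee n $ i" "\<And>i. ee n $ i \<le> M" and w: "M - m \<le> (1-\<delta>)^n * (2 * WW)"
    using width[OF d] by blast
  have "m * (1 - pb) \<le> 0" using nu_lower[of m "ee n"] mM nu_ee by simp
  then have "m \<le> 0" using pb_lt1 by (simp add: mult_le_0_iff)
  moreover have "0 \<le> M * (1 - pb)" using nu_upper[of "ee n" M] mM nu_ee by simp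
  then have "0 \<le> M" using pb_lt1 by (simp add: zero_le_mult_iff)
  ultimately show ?thesis using mM[of i] w by (simp add: abs_le_iff)
qed

lemma eta_bound:
  assumes "prob_vector \<eta>" and d: "0 < \<delta>" "\<delta> \<le> 1/2" "\<forall>i. \<delta> \<le> (Phim *v ej j0)$i"
  shows "\<bar>\<eta> \<bullet> ee n\<bar> \<le> (1-\<delta>)^n * (2 * WW)"
proof -
  have nn: "0 \<le> \<eta>$i" for i using assms(1) by (simp add: prob_vector_def)
  have "\<bar>\<eta> \<bullet> ee n\<bar> \<le> (\<Sum>i\<in>UNIV. \<bar>\<eta>$i * ee n $ i\<bar>)"
    unfolding inner_vec_def by (simp add: sum_abs)
  also have "\<dots> \<le> (\<Sum>i\<in>UNIV. \<eta>$i * ((1-\<delta>)^n * (2 * WW)))"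
    by (intro sum_mono) (simp add: abs_mult nn mult_left_mono ee_abs[OF d])
  also have "\<dots> = (1-\<delta>)^n * (2 * WW)"
    using assms(1) by (simp add: sum_distrib_right[symmetric] prob_vector_def)
  finally show ?thesis .
qed

lemma eta_ee:
  assumes "prob_vector \<eta>"
  shows "\<eta> \<bullet> ee n = expect_Sn K p \<eta> n - lam * real n - \<eta> \<bullet> rr"
proof -
  have "\<eta> \<bullet> 1 = 1" using assms by (simp add: prob_vector_def inner_vec_def)
  then show ?thesis
    by (simp add: ee_def inner_diff_right expect_H[OF assms] mult.commute)
qed

lemma main:
  shows "(\<forall>\<eta>. prob_vector \<eta> \<longrightarrow>
           (\<lambda>n. expect_Sn K p \<eta> n / real n) \<longlonglongrightarrow> pbar \<mu> p / (1 - pbar \<mu> p))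
       \<and> (\<exists>c1 c2. c1 > 0 \<and> c2 > 0 \<and>
           (\<forall>n::nat. \<forall>\<eta>. prob_vector \<eta> \<longrightarrow>
              \<bar>expect_Sn K p \<eta> n - pbar \<mu> p / (1 - pbar \<mu> p) * real n - \<eta> \<bullet> r_vec K p \<mu>\<bar>
                \<le> c1 * exp (- c2 * real n)))"
proof -
  obtain j0 \<delta> where d: "0 < \<delta>" "\<delta> \<le> 1/2" "\<forall>i. \<delta> \<le> (Phim *v ej j0)$i" using doeblin by blast
  have lamd: "pbar \<mu> p / (1 - pbar \<mu> p) = lam" by (simp add: lam_def pb_def)
  have rrd: "r_vec K p \<mu> = rr" by (simp add: rr_def)
  have key: "\<bar>expect_Sn K p \<eta> n - lam * real n - \<eta> \<bullet> rr\<bar> \<le> (1-\<delta>)^n * (2 * WW)"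
    if "prob_vector \<eta>" for \<eta> n
    using eta_bound[OF that d] eta_ee[OF that] by simp
  have pow1: "(1-\<delta>)^n \<le> 1" for n using d by (intro power_le_one) auto
  have part1: "(\<lambda>n. expect_Sn K p \<eta> n / real n) \<longlonglongrightarrow> lam" if eta: "prob_vector \<eta>" for \<eta>
  proof -
    define C where "C = 2 * WW + \<bar>\<eta> \<bullet> rr\<bar>"
    have ev: "\<forall>\<^sub>F n in sequentially. norm (expect_Sn K p \<eta> n / real n - lam) \<le> C / real n"
    proof (rule eventually_sequentiallyI[of 1])
      fix n :: nat assume n: "1 \<le> n"
      have "\<bar>expect_Sn K p \<eta> n - lam * real n - \<eta> \<bullet> rr\<bar> \<le> 2 * WW"
      proof -
        have "(1-\<delta>)^n * (2*WW) \<le> 2*WW"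
          using pow1[of n] WW_nonneg d by (intro mult_left_le_one_le) auto
        then show ?thesis using key[OF eta, of n] by linarith
      qed
      then have "\<bar>expect_Sn K p \<eta> n - lam * real n\<bar> \<le> C" unfolding C_def by linarith
      moreover have "expect_Sn K p \<eta> n / real n - lam = (expect_Sn K p \<eta> n - lam * real n) / real n"
        using n by (simp add: field_simps)
      ultimately show "norm (expect_Sn K p \<eta> n / real n - lam) \<le> C / real n"
        using n by (simp add: abs_divide divide_right_mono)
    qed
    have "(\<lambda>n. expect_Sn K p \<eta> n / real n - lam) \<longlonglongrightarrow> 0"
      by (rule Lim_null_comparison[OF ev lim_const_over_n])
    then show ?thesis by (rule LIM_zero_cancel)
  qed
  define c2 where "c2 = - ln (1 - \<delta>)"
  have c2pos: "0 < c2" unfolding c2_def using d by (simp add: ln_less_zero)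
  have powexp: "(1-\<delta>)^n = exp (- c2 * real n)" for n
  proof -
    have "(1-\<delta>) powr real n = (1-\<delta>)^n" using d by (intro powr_realpow) auto
    moreover have "(1-\<delta>) powr real n = exp (real n * ln (1-\<delta>))" using d by (simp add: powr_def)
    ultimately show ?thesis by (simp add: c2_def mult.commute)
  qed
  have part2: "\<bar>expect_Sn K p \<eta> n - lam * real n - \<eta> \<bullet> rr\<bar> \<le> (2 * WW + 1) * exp (- c2 * real n)"
    if "prob_vector \<eta>" for \<eta> n
  proof -
    have k: "\<bar>expect_Sn K p \<eta> n - lam * real n - \<eta> \<bullet> rr\<bar> \<le> (1-\<delta>)^n * (2 * WW)"
      by (rule key[OF that])
    have "(1-\<delta>)^n * (2 * WW) \<le> (2 * WW + 1) * exp (- c2 * real n)"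
      unfolding powexp[of n] by (simp add: algebra_simps)
    then show ?thesis using k by linarith
  qed
  show ?thesis
    unfolding lamd rrd
    using part1 part2 c2pos WW_nonneg
    by (intro conjI allI impI exI[of _ "2 * WW + 1"] exI[of _ c2]) (auto simp: mult.commute)
qed

end

theorem proposition3p1:
  fixes K :: "real^'r::finite^'r" and p :: "'r \<Rightarrow> real" and \<mu> :: "real^'r"
  assumes "stochastic_matrix K"
    and "unique_closed_irreducible K"
    and "stationary K \<mu>"
    and "\<forall>i. 0 < p i \<and> p i < 1"
  shows "(\<forall>\<eta>. prob_vector \<eta> \<longrightarrow>
           (\<lambda>n. expect_Sn K p \<eta> n / real n) \<longlonglongrightarrow> pbar \<mu> p / (1 - pbar \<mu> p))
       \<and> (\<exists>c1 c2. c1 > 0 \<and> c2 > 0 \<and>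
           (\<forall>n::nat. \<forall>\<eta>. prob_vector \<eta> \<longrightarrow>
              \<bar>expect_Sn K p \<eta> n - pbar \<mu> p / (1 - pbar \<mu> p) * real n - \<eta> \<bullet> r_vec K p \<mu>\<bar>
                \<le> c1 * exp (- c2 * real n)))"
proof -
  interpret chainp2 K p \<mu>
    by unfold_locales (use assms in auto)
  show ?thesis by (rule main)
qed



end
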